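(* Let $K, T \geq 1$ be integers, let $r_{tk}$ ($t = 1,\ldots,T$, $k = 1,\ldots,K$) be real numbers (the return of security $k$ at time $t$), and let $H_1,\ldots,H_K > 0$ be thresholds. For each security $k$ and time $t$, classify the observation $r_{tk}$ as $U$ (up) if $r_{tk} \geq H_k$, as $D$ (down) if $r_{tk} \leq -H_k$, and as $N$ (neutral) if $-H_k < r_{tk} < H_k$. For $p,q \in \{U,N,D\}$ and securities $i,j$, let $n_{ij}^{pq}$ be the number of times $t \in \{1,\ldots,T\}$ at which $r_{ti}$ is in category $p$ and $r_{tj}$ is in category $q$. Assume that for every $i,j$ the quantities $$n_{ij}^{(A)} = n_{ij}^{UU} + n_{ij}^{UN} + n_{ij}^{UD} + n_{ij}^{DU} + n_{ij}^{DN} + n_{ij}^{DD}, \qquad n_{ij}^{(B)} = n_{ij}^{UU} + n_{ij}^{NU} + n_{ij}^{DU} + n_{ij}^{UD} + n_{ij}^{ND} + n_{ij}^{DD}$$ are positive (equivalently, every security is in category $U$ or $D$ at least once). Define the $K\times K$ matrix $G^{(1)}$ with entries $$g_{ij}^{(1)} = \frac{n_{ij}^{UU} + n_{ij}^{DD} - n_{ij}^{UD} - n_{ij}^{DU}}{\sqrt{n_{ij}^{(A)}\, n_{ij}^{(B)}}}.$$ Then $G^{(1)}$ is positive semidefinite.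
   Context: In the paper the thresholds are $H_k = c\,\sigma_k$, where $c>0$ is a fixed fraction (e.g. $1/2$) and $\sigma_k$ is the sample standard deviation of the returns of security $k$; the result only uses that the thresholds are positive. The matrix $G^{(1)}$ is called Gerber Statistic 1. *)

theory Defs
  imports "HOL-Analysis.Analysis"
begin

datatype cat = U | N | D

definition classify :: "real \<Rightarrow> real \<Rightarrow> cat" where
  "classify h x = (if x \<ge> h then U else if x \<le> - h then D else N)"

definition ncount :: "nat \<Rightarrow> (nat \<Rightarrow> nat \<Rightarrow> real) \<Rightarrow> (nat \<Rightarrow> real)
    \<Rightarrow> nat \<Rightarrow> nat \<Rightarrow> cat \<Rightarrow> cat \<Rightarrow> nat" where
  "ncount T r H i j p q =
     card {t \<in> {1..T}. classify (H i) (r t i) = p \<and> classify (H j) (r t j) = q}"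

definition nA :: "nat \<Rightarrow> (nat \<Rightarrow> nat \<Rightarrow> real) \<Rightarrow> (nat \<Rightarrow> real) \<Rightarrow> nat \<Rightarrow> nat \<Rightarrow> nat" where
  "nA T r H i j = ncount T r H i j U U + ncount T r H i j U N + ncount T r H i j U D
                + ncount T r H i j D U + ncount T r H i j D N + ncount T r H i j D D"

definition nB :: "nat \<Rightarrow> (nat \<Rightarrow> nat \<Rightarrow> real) \<Rightarrow> (nat \<Rightarrow> real) \<Rightarrow> nat \<Rightarrow> nat \<Rightarrow> nat" where
  "nB T r H i j = ncount T r H i j U U + ncount T r H i j N U + ncount T r H i j D U
                + ncount T r H i j U D + ncount T r H i j N D + ncount T r H i j D D"

definition gerber1 :: "nat \<Rightarrow> (nat \<Rightarrow> nat \<Rightarrow> real) \<Rightarrow> (nat \<Rightarrow> real) \<Rightarrow> nat \<Rightarrow> nat \<Rightarrow> real" where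
  "gerber1 T r H i j =
     (real (ncount T r H i j U U) + real (ncount T r H i j D D)
      - real (ncount T r H i j U D) - real (ncount T r H i j D U))
     / sqrt (real (nA T r H i j) * real (nB T r H i j))"

definition psd :: "nat \<Rightarrow> (nat \<Rightarrow> nat \<Rightarrow> real) \<Rightarrow> bool" where
  "psd K G \<longleftrightarrow> (\<forall>i\<in>{1..K}. \<forall>j\<in>{1..K}. G i j = G j i) \<and>
     (\<forall>x :: nat \<Rightarrow> real. (\<Sum>i=1..K. \<Sum>j=1..K. x i * G i j * x j) \<ge> 0)"

end

theory Submission
  imports Defs
begin

definition sg :: "cat \<Rightarrow> real" where
  "sg c = (case c of U \<Rightarrow> 1 | D \<Rightarrow> -1 | N \<Rightarrow> 0)"

lemma card_filter_sum:
  "finite A \<Longrightarrow> real (card {x\<in>A. P x}) = (\<Sum>x\<in>A. if P x then 1 else 0)"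
  by (simp add: sum.inter_filter[symmetric])

lemma ncount_sum:
  "real (ncount T r H i j p q) = (\<Sum>t\<in>{1..T}. if classify (H i) (r t i) = p \<and> classify (H j) (r t j) = q then 1 else 0)"
  unfolding ncount_def by (rule card_filter_sum) simp

lemma num_eq:
  "real (ncount T r H i j U U) + real (ncount T r H i j D D)
      - real (ncount T r H i j U D) - real (ncount T r H i j D U)
   = (\<Sum>t\<in>{1..T}. sg (classify (H i) (r t i)) * sg (classify (H j) (r t j)))"
  unfolding ncount_sum sum.distrib[symmetric] sum_subtractf[symmetric]
  apply (rule sum.cong, simp)
  subgoal for t by (cases "classify (H i) (r t i)"; cases "classify (H j) (r t j)") (simp_all add: sg_def)
  done

lemma nA_eq:
  "real (nA T r H i j) = (\<Sum>t\<in>{1..T}. (sg (classify (H i) (r t i)))^2)"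
  unfolding nA_def of_nat_add ncount_sum sum.distrib[symmetric]
  apply (rule sum.cong, simp)
  subgoal for t by (cases "classify (H i) (r t i)"; cases "classify (H j) (r t j)") (simp_all add: sg_def)
  done

lemma nB_eq:
  "real (nB T r H i j) = (\<Sum>t\<in>{1..T}. (sg (classify (H j) (r t j)))^2)"
  unfolding nB_def of_nat_add ncount_sum sum.distrib[symmetric]
  apply (rule sum.cong, simp)
  subgoal for t by (cases "classify (H i) (r t i)"; cases "classify (H j) (r t j)") (simp_all add: sg_def)
  done

lemma quad_nonneg:
  fixes u :: "nat \<Rightarrow> nat \<Rightarrow> real"
  shows "(\<Sum>i\<in>I. \<Sum>j\<in>I. x i * (\<Sum>t\<in>S. u t i * u t j) * x j) \<ge> 0"
proof -
  have "(\<Sum>i\<in>I. \<Sum>j\<in>I. x i * (\<Sum>t\<in>S. u t i * u t j) * x j)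
      = (\<Sum>t\<in>S. (\<Sum>i\<in>I. x i * u t i) * (\<Sum>j\<in>I. x j * u t j))"
    by (simp add: sum_distrib_left sum_distrib_right sum_product sum.swap[of _ S] algebra_simps)
  also have "\<dots> \<ge> 0" by (intro sum_nonneg) simp
  finally show ?thesis .
qed

theorem proposition1:
  fixes K T :: nat and r :: "nat \<Rightarrow> nat \<Rightarrow> real" and H :: "nat \<Rightarrow> real"
  assumes "K \<ge> 1" and "T \<ge> 1"
    and "\<forall>k\<in>{1..K}. H k > 0"
    and "\<forall>i\<in>{1..K}. \<forall>j\<in>{1..K}. nA T r H i j > 0 \<and> nB T r H i j > 0"
  shows "psd K (gerber1 T r H)"
proof -
  define s where "s t k = sg (classify (H k) (r t k))" for t k
  define c where "c k = sqrt (\<Sum>t\<in>{1..T}. (s t k)^2)" for k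
  define u where "u t k = s t k / c k" for t k
  have g: "gerber1 T r H i j = (\<Sum>t\<in>{1..T}. u t i * u t j)" for i j
  proof -
    have "gerber1 T r H i j = (\<Sum>t\<in>{1..T}. s t i * s t j) / (c i * c j)"
      unfolding gerber1_def num_eq nA_eq nB_eq c_def s_def by (simp add: real_sqrt_mult)
    also have "\<dots> = (\<Sum>t\<in>{1..T}. u t i * u t j)"
      unfolding u_def by (simp add: sum_divide_distrib)
    finally show ?thesis .
  qed
  show ?thesis unfolding psd_def g
    using quad_nonneg[where I="{1..K}" and S="{1..T}" and u=u] by (auto simp: mult.commute)
qed

end
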